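(* Let $P$ be a Poisson tensor on $\mathbb{R}^3$, let $H\in C^\infty(\mathbb{R}^3)$, let $S\in C^\infty(\mathbb{R}^3)$ satisfy $PdS=0$, and let $g$ be the symmetric tensor with components $g^{ij}=H^iH^j-\delta^{ij}\sum_k H^kH^k$. Then the system $\dot{x}=PdH+gdS$ and the Hamiltonian system $\dot{x}=PdH$ have the same regular equilibria, i.e. for every point $x$ with $P(x)\neq 0$, $x$ is an equilibrium of one system if and only if it is an equilibrium of the other.
   Context: $\mathbb{R}^3$ carries the standard Euclidean metric, used to identify tangent and cotangent spaces with $\mathbb{R}^3$; $H^i=H_i=\partial H/\partial x^i$. A Poisson tensor is a skew-symmetric bivector field satisfying the Jacobi identity. A regular equilibrium is an equilibrium point $x$ with $P(x)\neq 0$. *)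

theory Defs
  imports "HOL-Analysis.Analysis"
begin

type_synonym R3 = "real ^ 3"

definition pd :: "3 \<Rightarrow> (R3 \<Rightarrow> real) \<Rightarrow> R3 \<Rightarrow> real" where
  "pd i f x = frechet_derivative f (at x) (axis i 1)"

text \<open>Gradient (dH identified with a vector via the Euclidean metric): components H_i.\<close>
definition grad :: "(R3 \<Rightarrow> real) \<Rightarrow> R3 \<Rightarrow> R3" where
  "grad f x = (\<chi> i. pd i f x)"

definition smooth3 :: "(R3 \<Rightarrow> real) \<Rightarrow> bool" where
  "smooth3 f \<longleftrightarrow> (\<exists>F. f \<in> F \<and>
     (\<forall>g\<in>F. continuous_on UNIV g \<and> (\<forall>x. g differentiable (at x)) \<and> (\<forall>i. pd i g \<in> F)))"

definition poisson_tensor :: "(R3 \<Rightarrow> real ^ 3 ^ 3) \<Rightarrow> bool" where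
  "poisson_tensor P \<longleftrightarrow>
     (\<forall>i j. smooth3 (\<lambda>x. P x $ i $ j)) \<and>
     (\<forall>x i j. P x $ i $ j = - (P x $ j $ i)) \<and>
     (\<forall>x i j k. (\<Sum>l\<in>UNIV.
         P x $ i $ l * pd l (\<lambda>y. P y $ j $ k) x
       + P x $ j $ l * pd l (\<lambda>y. P y $ k $ i) x
       + P x $ k $ l * pd l (\<lambda>y. P y $ i $ j) x) = 0)"

definition gten :: "(R3 \<Rightarrow> real) \<Rightarrow> R3 \<Rightarrow> real ^ 3 ^ 3" where
  "gten H x = (\<chi> i j. grad H x $ i * grad H x $ j
                  - (if i = j then (\<Sum>k\<in>UNIV. grad H x $ k * grad H x $ k) else 0))"

end

theory Submission
  imports Defs
begin

lemma fwd:
  fixes a b c h1 h2 h3 t1 t2 t3 :: real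
  assumes K1: "-c*t2 + b*t3 = 0" and K2: "c*t1 - a*t3 = 0" and K3: "-b*t1 + a*t2 = 0"
  and E1: "(-c*h2 + b*h3) + h1*(h1*t1+h2*t2+h3*t3) - t1*(h1*h1+h2*h2+h3*h3) = 0"
  and E2: "(c*h1 - a*h3) + h2*(h1*t1+h2*t2+h3*t3) - t2*(h1*h1+h2*h2+h3*h3) = 0"
  and E3: "(-b*h1 + a*h2) + h3*(h1*t1+h2*t2+h3*t3) - t3*(h1*h1+h2*h2+h3*h3) = 0"
  shows "-c*h2 + b*h3 = 0 \<and> c*h1 - a*h3 = 0 \<and> -b*h1 + a*h2 = 0"
proof -
  have "(-c*h2 + b*h3)^2 + (c*h1 - a*h3)^2 + (-b*h1 + a*h2)^2 = 0"
    using K1 K2 K3 E1 E2 E3 by algebra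
  then show ?thesis by (smt (verit) sum_power2_eq_zero_iff power2_eq_square zero_le_power2)
qed
lemma bwd:
  fixes a b c h1 h2 h3 t1 t2 t3 :: real
  assumes K1: "-c*t2 + b*t3 = 0" and K2: "c*t1 - a*t3 = 0" and K3: "-b*t1 + a*t2 = 0"
  and W1: "-c*h2 + b*h3 = 0" and W2: "c*h1 - a*h3 = 0" and W3: "-b*h1 + a*h2 = 0"
  and nz: "a \<noteq> 0 \<or> b \<noteq> 0 \<or> c \<noteq> 0"
  shows "h1*(h1*t1+h2*t2+h3*t3) - t1*(h1*h1+h2*h2+h3*h3) = 0 \<and>
         h2*(h1*t1+h2*t2+h3*t3) - t2*(h1*h1+h2*h2+h3*h3) = 0 \<and>
         h3*(h1*t1+h2*t2+h3*t3) - t3*(h1*h1+h2*h2+h3*h3) = 0"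
proof -
  have n: "a*a+b*b+c*c \<noteq> 0" using nz by (smt (verit) zero_le_square mult_pos_pos mult_neg_neg linorder_neqE_linordered_idom)
  have "(a*a+b*b+c*c)^2 * (h2*t3 - h3*t2) = 0" using K1 K2 K3 W1 W2 W3 by algebra
  hence x1: "h2*t3 - h3*t2 = 0" using n by simp
  have "(a*a+b*b+c*c)^2 * (h3*t1 - h1*t3) = 0" using K1 K2 K3 W1 W2 W3 by algebra
  hence x2: "h3*t1 - h1*t3 = 0" using n by simp
  have "(a*a+b*b+c*c)^2 * (h1*t2 - h2*t1) = 0" using K1 K2 K3 W1 W2 W3 by algebra
  hence x3: "h1*t2 - h2*t1 = 0" using n by simp
  show ?thesis using x1 x2 x3 by algebra
qed

theorem mainTheorem4:
  fixes P :: "R3 \<Rightarrow> real ^ 3 ^ 3" and H S :: "R3 \<Rightarrow> real"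
  assumes "poisson_tensor P"
    and "smooth3 H"
    and "smooth3 S"
    and "\<forall>x. P x *v grad S x = 0"
  shows "\<forall>x. P x \<noteq> 0 \<longrightarrow>
           ((P x *v grad H x + gten H x *v grad S x = 0) \<longleftrightarrow> (P x *v grad H x = 0))"
proof (intro allI impI)
  fix x assume nz0: "P x \<noteq> 0"
  have sk: "\<And>i j. P x $ i $ j = - (P x $ j $ i)" using assms(1) unfolding poisson_tensor_def by blast
  define M where "M = P x"
  define h where "h = grad H x"
  define s where "s = grad S x"
  have sk': "\<And>i j. M $ i $ j = - (M $ j $ i)" unfolding M_def by (rule sk)
  have d: "M $ i $ i = 0" for i using sk'[of i i] by linarith
  have Ms: "M *v s = 0" using assms(4) M_def s_def by simp
  define a where "a = M $ 3 $ 2"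
  define b where "b = M $ 1 $ 3"
  define c where "c = M $ 2 $ 1"
  have m12: "M $ 1 $ 2 = - c" using sk'[of 1 2] c_def by simp
  have m23: "M $ 2 $ 3 = - a" using sk'[of 2 3] a_def by simp
  have m31: "M $ 3 $ 1 = - b" using sk'[of 3 1] b_def by simp
  have mv1: "\<And>v. (M *v v) $ 1 = -c*(v$2) + b*(v$3)"
    by (simp add: matrix_vector_mult_def sum_3 d m12 b_def)
  have mv2: "\<And>v. (M *v v) $ 2 = c*(v$1) - a*(v$3)"
    by (simp add: matrix_vector_mult_def sum_3 d m23 c_def)
  have mv3: "\<And>v. (M *v v) $ 3 = -b*(v$1) + a*(v$2)"
    by (simp add: matrix_vector_mult_def sum_3 d m31 a_def)
  have z: "\<And>v::real^3. v = 0 \<longleftrightarrow> v$1 = 0 \<and> v$2 = 0 \<and> v$3 = 0"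
    by (simp add: vec_eq_iff forall_3)
  have G: "gten H x = (\<chi> i j. h $ i * h $ j - (if i = j then (\<Sum>k\<in>UNIV. h $ k * h $ k) else 0))"
    unfolding gten_def h_def ..
  have gs: "\<And>i. (gten H x *v s) $ i = h$i*(h$1* s$1+h$2* s$2+h$3* s$3) - s$i*(h$1*h$1+h$2*h$2+h$3*h$3)"
  proof -
    fix i :: 3
    have "(gten H x *v s) $ i = (\<Sum>j\<in>UNIV. (h $ i * h $ j - (if i = j then (\<Sum>k\<in>UNIV. h $ k * h $ k) else 0)) * s $ j)"
      by (simp add: G matrix_vector_mult_def)
    also have "\<dots> = (\<Sum>j\<in>UNIV. h $ i * h $ j * s $ j) - (\<Sum>j\<in>UNIV. (if i = j then (\<Sum>k\<in>UNIV. h $ k * h $ k) else 0) * s $ j)"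
      by (simp add: left_diff_distrib sum_subtractf)
    also have "\<dots> = h$i*(h$1* s$1+h$2* s$2+h$3* s$3) - s$i*(h$1*h$1+h$2*h$2+h$3*h$3)"
      using exhaust_3[of i] by (elim disjE) (simp_all add: sum_3 algebra_simps)
    finally show "(gten H x *v s) $ i = h$i*(h$1* s$1+h$2* s$2+h$3* s$3) - s$i*(h$1*h$1+h$2*h$2+h$3*h$3)" .
  qed
  have nz: "a \<noteq> 0 \<or> b \<noteq> 0 \<or> c \<noteq> 0"
  proof (rule ccontr)
    assume "\<not> ?thesis"
    hence "\<forall>i j. M $ i $ j = 0" using d m12 m23 m31 a_def b_def c_def by (auto simp: forall_3)
    hence "M = 0" by (simp add: vec_eq_iff)
    thus False using nz0 M_def by simp
  qed
  have K1: "-c*(s$2) + b*(s$3) = 0" and K2: "c*(s$1) - a*(s$3) = 0" and K3: "-b*(s$1) + a*(s$2) = 0"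
    using Ms z[of "M *v s"] mv1 mv2 mv3 by auto
  have "(M *v h + gten H x *v s = 0) \<longleftrightarrow> (M *v h = 0)"
  proof
    assume E: "M *v h + gten H x *v s = 0"
    then have E1: "(M *v h)$1 + (gten H x *v s)$1 = 0" and E2: "(M *v h)$2 + (gten H x *v s)$2 = 0"
      and E3: "(M *v h)$3 + (gten H x *v s)$3 = 0" by (simp_all add: vec_eq_iff)
    show "M *v h = 0"
    proof -
      have "-c*(h$2) + b*(h$3) = 0 \<and> c*(h$1) - a*(h$3) = 0 \<and> -b*(h$1) + a*(h$2) = 0"
        apply (rule fwd[OF K1 K2 K3])
        using E1 E2 E3 unfolding mv1 mv2 mv3 gs by simp_all
      then show ?thesis unfolding z mv1 mv2 mv3 by simp
    qed
  next
    assume W: "M *v h = 0"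
    then have W1: "-c*(h$2) + b*(h$3) = 0" and W2: "c*(h$1) - a*(h$3) = 0" and W3: "-b*(h$1) + a*(h$2) = 0"
      using z[of "M *v h"] mv1 mv2 mv3 by auto
    show "M *v h + gten H x *v s = 0"
      using bwd[OF K1 K2 K3 W1 W2 W3 nz] W1 W2 W3 unfolding z vector_add_component mv1 mv2 mv3 gs by simp
  qed
  thus "(P x *v grad H x + gten H x *v grad S x = 0) \<longleftrightarrow> (P x *v grad H x = 0)"
    using M_def h_def s_def by simp
qed

end
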